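(* Let $\mathcal{A}$ be a finite nonempty set of positive integers, let $k\ge 1$ be an integer and let $k_1\ge k_2\ge 1$ be real numbers with $k+1>k_2$. Set $X=\max\mathcal{A}$, $z=X^{1/k_1}$, $y=X^{1/k_2}$ and $\lambda=k+1-k_2$. Suppose that for some constants $c>0$ and $0<\delta<1$, $$\sum_{\substack{p\text{ prime}\\ z\le p<y}}|\mathcal{A}_{p^2}|\le c|\mathcal{A}|^{1-\delta}.$$ Then $$r_k(\mathcal{A})\ge \frac{\lambda}{k}S(\mathcal{A},z)-\frac1k\sum_{\substack{p\text{ prime}\\ z\le p<y}}\left(1-\frac{\log p}{\log y}\right)S(\mathcal{A}_p,z)-\frac{\lambda c}{k}|\mathcal{A}|^{1-\delta}.$$
   Context: All $p$ denote primes. For a positive integer $d$ and a finite set $\mathcal{B}$ of positive integers, $\mathcal{B}_d=\{b\in\mathcal{B}: d\mid b\}$. $P(z)=\prod_{p<z}p$, and $S(\mathcal{B},z)=\#\{b\in\mathcal{B}:\gcd(b,P(z))=1\}$. $r_k(\mathcal{A})=\#\{a\in\mathcal{A}:\Omega(a)\le k\}$, where $\Omega(a)$ is the number of prime factors of $a$ counted with multiplicity. *)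

theory Defs
  imports "HOL-Analysis.Analysis" "HOL-Computational_Algebra.Primes"
begin

definition mult_sub :: "nat set \<Rightarrow> nat \<Rightarrow> nat set" where
  "mult_sub B d = {b \<in> B. d dvd b}"

definition primorial_lt :: "real \<Rightarrow> nat" where
  "primorial_lt z = (\<Prod>p\<in>{p::nat. prime p \<and> real p < z}. p)"

definition sift :: "nat set \<Rightarrow> real \<Rightarrow> nat" where
  "sift B z = card {b \<in> B. gcd b (primorial_lt z) = 1}"

definition bigOmega :: "nat \<Rightarrow> nat" where
  "bigOmega a = size (prime_factorization a)"

definition r_k :: "nat \<Rightarrow> nat set \<Rightarrow> nat" where
  "r_k k A = card {a \<in> A. bigOmega a \<le> k}"

end

theory Submission
  imports Defs
begin

lemma omega_sum: "a > 0 \<Longrightarrow> bigOmega a = (\<Sum>p\<in>prime_factors a. multiplicity p a)"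
  unfolding bigOmega_def size_multiset_overloaded_eq
  by (intro sum.cong refl) (simp add: count_prime_factorization_prime in_prime_factors_imp_prime)

lemma ln_sum: "(a::nat) > 0 \<Longrightarrow> ln (real a) = (\<Sum>p\<in>prime_factors a. real (multiplicity p a) * ln (real p))"
proof -
  assume a: "a > 0"
  have "a = (\<Prod>p\<in>prime_factors a. p ^ multiplicity p a)" by (rule prime_factorization_nat[OF a])
  then have "real a = real (\<Prod>p\<in>prime_factors a. p ^ multiplicity p a)" by (rule arg_cong)
  also have "\<dots> = (\<Prod>p\<in>prime_factors a. real p ^ multiplicity p a)"
    unfolding of_nat_prod of_nat_power ..
  finally have e: "real a = (\<Prod>p\<in>prime_factors a. real p ^ multiplicity p a)" .
  have "ln (\<Prod>p\<in>prime_factors a. real p ^ multiplicity p a) = (\<Sum>p\<in>prime_factors a. ln (real p ^ multiplicity p a))"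
    by (rule ln_prod) (auto dest: in_prime_factors_imp_prime prime_gt_0_nat)
  also have "\<dots> = (\<Sum>p\<in>prime_factors a. real (multiplicity p a) * ln (real p))"
    by (intro sum.cong refl) (auto simp: ln_realpow dest: in_prime_factors_imp_prime prime_gt_0_nat)
  finally show ?thesis unfolding e .
qed
lemma key:
  fixes a X k :: nat and k2 z y :: real
  assumes a0: "a > 0" and aX: "a \<le> X" and k2: "k2 \<ge> 1" and ydef: "y = real X powr (1/k2)"
    and sift: "\<And>p. prime p \<Longrightarrow> p dvd a \<Longrightarrow> z \<le> real p"
    and sq: "\<not> (\<exists>p. prime p \<and> z \<le> real p \<and> real p < y \<and> p^2 dvd a)"
    and om: "bigOmega a > k"
  shows "real k + 1 - k2 \<le> (\<Sum>p\<in>{p. prime p \<and> z \<le> real p \<and> real p < y \<and> p dvd a}. 1 - ln (real p) / ln y)"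
proof -
  define Q where "Q = prime_factors a"
  define f where "f p = 1 - ln (real p) / ln y" for p :: nat
  have finQ: "finite Q" unfolding Q_def by simp
  have "a \<noteq> 1" using om by (auto simp: bigOmega_def)
  with a0 have a2: "a \<ge> 2" by linarith
  have X2: "real X \<ge> 2" using a2 aX by linarith
  have lny: "ln y = ln (real X) / k2" using ydef X2 by simp
  have lnX: "ln (real X) > 0" using X2 by simp
  have lny0: "ln y > 0" using lny lnX k2 by simp
  have lna: "ln (real a) \<le> ln (real X)" using a0 aX by simp
  have "(\<Sum>p\<in>Q. real (multiplicity p a) * f p)
        = real (bigOmega a) - ln (real a) / ln y"
    unfolding f_def Q_def using a0
    by (simp add: omega_sum ln_sum right_diff_distrib sum_subtractf sum_divide_distrib)
  also have "k2 * ln y = ln (real X)" using lny k2 by simp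
  hence "ln (real a) / ln y \<le> k2"
    using lna lny0 by (simp add: divide_simps)
  hence "real (bigOmega a) - ln (real a) / ln y \<ge> real k + 1 - k2" using om by linarith
  finally have A: "real k + 1 - k2 \<le> (\<Sum>p\<in>Q. real (multiplicity p a) * f p)" .
  define Q1 where "Q1 = {p. prime p \<and> z \<le> real p \<and> real p < y \<and> p dvd a}"
  have Q1Q: "Q1 \<subseteq> Q" unfolding Q1_def Q_def using a0
    by (auto simp: prime_factors_multiplicity prime_multiplicity_gt_zero_iff)
  have "(\<Sum>p\<in>Q. real (multiplicity p a) * f p) \<le> (\<Sum>p\<in>Q1. real (multiplicity p a) * f p)"
  proof -
    have "(\<Sum>p\<in>Q. real (multiplicity p a) * f p) = (\<Sum>p\<in>Q1. real (multiplicity p a) * f p) + (\<Sum>p\<in>Q-Q1. real (multiplicity p a) * f p)"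
      using finQ Q1Q by (metis add.commute sum.subset_diff)
    moreover have "(\<Sum>p\<in>Q-Q1. real (multiplicity p a) * f p) \<le> 0"
    proof (intro sum_nonpos)
      fix p assume p: "p \<in> Q - Q1"
      then have pp: "prime p" "p dvd a" using a0 unfolding Q_def by (auto simp: in_prime_factors_iff)
      then have "z \<le> real p" using sift by auto
      with p pp have "real p \<ge> y" unfolding Q1_def by auto
      moreover have "y > 0" using ydef X2 by simp
      ultimately have "ln (real p) \<ge> ln y" by simp
      then have "f p \<le> 0" unfolding f_def using lny0 by (simp add: divide_simps)
      then show "real (multiplicity p a) * f p \<le> 0" by (simp add: mult_nonneg_nonpos)
    qed
    ultimately show ?thesis by linarith
  qed
  also have "\<dots> = (\<Sum>p\<in>Q1. f p)"
  proof (intro sum.cong refl)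
    fix p assume p: "p \<in> Q1"
    then have pp: "prime p" "p dvd a" "\<not> p^2 dvd a" using sq unfolding Q1_def by auto
    have "p \<noteq> 1" using pp(1) by auto
    have "multiplicity p a \<ge> 1" using pp a0
      by (simp add: prime_multiplicity_gt_zero_iff Suc_le_eq)
    moreover have "\<not> 2 \<le> multiplicity p a" using pp(3) a0 \<open>p \<noteq> 1\<close> power_dvd_iff_le_multiplicity[of a p 2]
      by (simp add: prime_gt_1_nat)
    ultimately have "multiplicity p a \<ge> 1" "multiplicity p a < 2" by auto
    then have "multiplicity p a = 1" by linarith
    then show "real (multiplicity p a) * f p = f p" by simp
  qed
  finally have B: "(\<Sum>p\<in>Q. real (multiplicity p a) * f p) \<le> (\<Sum>p\<in>Q1. f p)" .
  have "real k + 1 - k2 \<le> (\<Sum>p\<in>Q1. f p)" using A B by (rule order_trans)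
  then show ?thesis unfolding Q1_def f_def .
qed

lemma fin_lt: "finite {p::nat. P p \<and> real p < y}"
proof (rule finite_subset[of _ "{..<nat \<lceil>y\<rceil>}"])
  show "{p::nat. P p \<and> real p < y} \<subseteq> {..<nat \<lceil>y\<rceil>}"
  proof
    fix p assume "p \<in> {p::nat. P p \<and> real p < y}"
    then have "real p < y" by simp
    then have "real p < real (nat \<lceil>y\<rceil>)" using real_nat_ceiling_ge[of y] by linarith
    then show "p \<in> {..<nat \<lceil>y\<rceil>}" by simp
  qed
qed simp

theorem lemma3p6:
  fixes A :: "nat set" and k :: nat and k1 k2 c \<delta> :: real
  assumes "finite A" "A \<noteq> {}" "\<forall>a\<in>A. a > 0"
    and "k \<ge> 1" "k1 \<ge> k2" "k2 \<ge> 1" "real k + 1 > k2"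
    and "c > 0" "0 < \<delta>" "\<delta> < 1"
    and "(\<Sum>p\<in>{p::nat. prime p \<and> real (Max A) powr (1/k1) \<le> real p \<and> real p < real (Max A) powr (1/k2)}.
            real (card (mult_sub A (p^2)))) \<le> c * real (card A) powr (1 - \<delta>)"
  shows "let X = Max A; z = real X powr (1/k1); y = real X powr (1/k2); lam = real k + 1 - k2 in
    real (r_k k A) \<ge> lam / real k * real (sift A z)
      - 1 / real k * (\<Sum>p\<in>{p::nat. prime p \<and> z \<le> real p \<and> real p < y}.
                          (1 - ln (real p) / ln y) * real (sift (mult_sub A p) z))
      - lam * c / real k * real (card A) powr (1 - \<delta>)"
proof -
  define X where "X = Max A"
  define z where "z = real X powr (1/k1)"
  define y where "y = real X powr (1/k2)"
  define lam where "lam = real k + 1 - k2"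
  define P where "P = {p::nat. prime p \<and> z \<le> real p \<and> real p < y}"
  define S where "S = {a\<in>A. gcd a (primorial_lt z) = 1}"
  define f where "f p = 1 - ln (real p) / ln y" for p :: nat
  define w where "w a = lam - (\<Sum>p\<in>P. if p dvd a then f p else 0)" for a :: nat
  define R where "R a = real k * (if bigOmega a \<le> k then 1 else 0) + lam * real (card {p\<in>P. p^2 dvd a})" for a :: nat
  have finA: "finite A" using assms(1) .
  have finP: "finite P" unfolding P_def using fin_lt[of "\<lambda>p. prime p \<and> z \<le> real p" y] by (simp add: conj_assoc)
  have finS: "finite S" unfolding S_def using finA by simp
  have SA: "S \<subseteq> A" unfolding S_def by auto
  have lam0: "lam > 0" and lamk: "lam \<le> real k" unfolding lam_def using assms(6,7) by auto
  have fpos: "f p \<ge> 0" if "p \<in> P" for p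
  proof -
    have pp: "prime p" "real p < y" using that unfolding P_def by auto
    have "real p \<ge> 2" using prime_ge_2_nat[OF pp(1)] by linarith
    then have "ln (real p) < ln y" "ln (real p) > 0" using pp(2) by auto
    then show ?thesis unfolding f_def by (simp add: divide_simps)
  qed
  have primdiv: "z \<le> real p" if "a \<in> S" "prime p" "p dvd a" for a p
  proof (rule ccontr)
    assume "\<not> z \<le> real p"
    then have "p \<in> {p::nat. prime p \<and> real p < z}" using that by auto
    moreover have "finite {p::nat. prime p \<and> real p < z}" using fin_lt[of prime z] .
    ultimately have "p dvd primorial_lt z" unfolding primorial_lt_def by (intro dvd_prodI)
    then have "p dvd gcd a (primorial_lt z)" using that(3) by (simp add: gcd_greatest)
    moreover have g1: "gcd a (primorial_lt z) = 1" using that(1) unfolding S_def by simp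
    ultimately have "p dvd 1" by metis
    then show False using that(2) by simp
  qed
  have sum1: "(\<Sum>a\<in>S. w a) = lam * real (card S) - (\<Sum>p\<in>P. f p * real (sift (mult_sub A p) z))"
  proof -
    have "(\<Sum>a\<in>S. (\<Sum>p\<in>P. if p dvd a then f p else 0)) = (\<Sum>p\<in>P. (\<Sum>a\<in>S. if p dvd a then f p else 0))"
      by (rule sum.swap)
    also have "\<dots> = (\<Sum>p\<in>P. f p * real (sift (mult_sub A p) z))"
    proof (intro sum.cong refl)
      fix p
      have "(\<Sum>a\<in>S. if p dvd a then f p else 0) = (\<Sum>a\<in>{a\<in>S. p dvd a}. f p)"
        using finS sum.inter_filter[of S "\<lambda>a. f p" "\<lambda>a. p dvd a"] by simp
      also have "{a\<in>S. p dvd a} = {b \<in> mult_sub A p. gcd b (primorial_lt z) = 1}"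
        unfolding S_def mult_sub_def by auto
      finally show "(\<Sum>a\<in>S. if p dvd a then f p else 0) = f p * real (sift (mult_sub A p) z)"
        unfolding sift_def by simp
    qed
    finally show ?thesis unfolding w_def by (simp add: sum_subtractf)
  qed
  have pw: "w a \<le> R a" if aS: "a \<in> S" for a
  proof -
    have a0: "a > 0" using aS SA assms(3) by auto
    have aX: "a \<le> X" unfolding X_def using aS SA finA by auto
    have Rge: "R a \<ge> lam * real (card {p\<in>P. p^2 dvd a})" unfolding R_def by simp
    have wle: "w a \<le> lam" unfolding w_def using fpos by (simp add: sum_nonneg)
    show ?thesis
    proof (cases "\<exists>p\<in>P. p^2 dvd a")
      case True
      then have "{p\<in>P. p^2 dvd a} \<noteq> {}" by auto
      then have "card {p\<in>P. p^2 dvd a} \<ge> 1" using finP by (simp add: Suc_le_eq card_gt_0_iff)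
      then have "lam * real (card {p\<in>P. p^2 dvd a}) \<ge> lam" using lam0 by simp
      then show ?thesis using Rge wle by linarith
    next
      case False
      then have c0: "{p\<in>P. p^2 dvd a} = {}" by auto
      show ?thesis
      proof (cases "bigOmega a \<le> k")
        case True
        then show ?thesis using wle lamk unfolding R_def c0 by simp
      next
        case om: False
        have "real k + 1 - k2 \<le> (\<Sum>p\<in>{p. prime p \<and> z \<le> real p \<and> real p < y \<and> p dvd a}. 1 - ln (real p) / ln y)"
          apply (rule key[OF a0 aX assms(6) y_def])
          using primdiv[OF aS] False om unfolding P_def by auto
        also have "{p. prime p \<and> z \<le> real p \<and> real p < y \<and> p dvd a} = {p\<in>P. p dvd a}"
          unfolding P_def by auto
        finally have "lam \<le> (\<Sum>p\<in>P. if p dvd a then f p else 0)"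
          unfolding lam_def f_def using finP by (simp add: sum.inter_filter)
        then have "w a \<le> 0" unfolding w_def by simp
        then show ?thesis using om unfolding R_def c0 by simp
      qed
    qed
  qed
  have Rnn: "R a \<ge> 0" for a unfolding R_def using lam0 by simp
  have "(\<Sum>a\<in>S. w a) \<le> (\<Sum>a\<in>S. R a)" using pw by (intro sum_mono)
  also have "\<dots> \<le> (\<Sum>a\<in>A. R a)" using finA SA Rnn by (intro sum_mono2) auto
  also have "\<dots> = real k * real (r_k k A) + lam * (\<Sum>p\<in>P. real (card (mult_sub A (p^2))))"
  proof -
    have e1: "(\<Sum>a\<in>A. (if bigOmega a \<le> k then 1 else 0::real)) = real (r_k k A)"
      using finA sum.inter_filter[of A "\<lambda>a. 1::real" "\<lambda>a. bigOmega a \<le> k"] by (simp add: r_k_def)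
    have "(\<Sum>a\<in>A. real (card {p\<in>P. p^2 dvd a})) = (\<Sum>a\<in>A. \<Sum>p\<in>P. if p^2 dvd a then 1 else (0::real))"
      using finP by (intro sum.cong refl) (simp add: sum.inter_filter[of P "\<lambda>p. 1::real", symmetric])
    also have "\<dots> = (\<Sum>p\<in>P. \<Sum>a\<in>A. if p^2 dvd a then 1 else (0::real))" by (rule sum.swap)
    also have "\<dots> = (\<Sum>p\<in>P. real (card (mult_sub A (p^2))))"
      using finA by (intro sum.cong refl) (simp add: mult_sub_def sum.inter_filter[of A "\<lambda>p. 1::real", symmetric])
    finally have e2: "(\<Sum>a\<in>A. real (card {p\<in>P. p^2 dvd a})) = (\<Sum>p\<in>P. real (card (mult_sub A (p^2))))" .
    show ?thesis unfolding R_def using e1 e2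
      by (simp add: sum.distrib sum_distrib_left[symmetric])
  qed
  finally have main: "lam * real (card S) - (\<Sum>p\<in>P. f p * real (sift (mult_sub A p) z))
      \<le> real k * real (r_k k A) + lam * (\<Sum>p\<in>P. real (card (mult_sub A (p^2))))"
    using sum1 by simp
  have hyp: "(\<Sum>p\<in>P. real (card (mult_sub A (p^2)))) \<le> c * real (card A) powr (1 - \<delta>)"
    using assms(11) unfolding P_def z_def y_def X_def .
  have cS: "card S = sift A z" unfolding S_def sift_def ..
  have k0: "real k > 0" using assms(4) by simp
  have "lam * real (sift A z) - (\<Sum>p\<in>P. f p * real (sift (mult_sub A p) z)) - lam * (c * real (card A) powr (1 - \<delta>))
      \<le> real k * real (r_k k A)"
    using main[unfolded cS] mult_left_mono[OF hyp less_imp_le[OF lam0]] by linarith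
  then have le: "(lam * real (sift A z) - (\<Sum>p\<in>P. f p * real (sift (mult_sub A p) z)) - lam * (c * real (card A) powr (1 - \<delta>))) / real k
      \<le> real (r_k k A)"
    using k0 by (simp add: pos_divide_le_eq mult.commute)
  have eq: "lam / real k * real (sift A z) - 1 / real k * (\<Sum>p\<in>P. f p * real (sift (mult_sub A p) z))
      - lam * c / real k * real (card A) powr (1 - \<delta>) = (lam * real (sift A z) - (\<Sum>p\<in>P. f p * real (sift (mult_sub A p) z)) - lam * (c * real (card A) powr (1 - \<delta>))) / real k"
    by (simp add: diff_divide_distrib)
  have fin: "lam / real k * real (sift A z) - 1 / real k * (\<Sum>p\<in>P. f p * real (sift (mult_sub A p) z))
      - lam * c / real k * real (card A) powr (1 - \<delta>) \<le> real (r_k k A)"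
    using le eq by simp
  show ?thesis unfolding Let_def using fin unfolding f_def P_def lam_def z_def y_def X_def .
qed

end
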